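(* Let $n,r\in\mathbb N$ with $n\ge 15$ and $3\le r\le n-9$. Then $$\mathrm{ex}(n-1+r;T_n^3)=\max\Big\{\Big\lfloor\frac{(n-5)(n-1+r)}2\Big\rfloor,\ \binom{n-1}2+\binom r2\Big\}.$$
   Context: All graphs are finite simple graphs. For a graph $L$, $\mathrm{ex}(p;L)$ denotes the maximum number of edges in a graph on $p$ vertices that contains no subgraph isomorphic to $L$. For $n\ge 6$, $T_n^3$ is the tree on vertex set $\{v_0,\ldots,v_{n-1}\}$ with edge set $\{v_0v_1,v_0v_2,\ldots,v_0v_{n-4},\ v_1v_{n-3},\ v_1v_{n-2},\ v_1v_{n-1}\}$. $\lfloor x\rfloor$ is the greatest integer not exceeding $x$. *)

theory Defs
  imports Main
begin

definition simple_graph :: "'a set \<Rightarrow> 'a set set \<Rightarrow> bool" where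
  "simple_graph V E \<longleftrightarrow> finite V \<and> (\<forall>e\<in>E. e \<subseteq> V \<and> card e = 2)"

definition contains_subgraph :: "'a set \<Rightarrow> 'a set set \<Rightarrow> 'b set \<Rightarrow> 'b set set \<Rightarrow> bool" where
  "contains_subgraph V E VL EL \<longleftrightarrow>
     (\<exists>f. inj_on f VL \<and> f ` VL \<subseteq> V \<and> (\<forall>e\<in>EL. f ` e \<in> E))"

text \<open>ex(p;L): maximum number of edges of a simple graph on p vertices (w.l.o.g. on {0..<p})
  with no subgraph isomorphic to L.\<close>
definition ex :: "nat \<Rightarrow> 'b set \<Rightarrow> 'b set set \<Rightarrow> nat" where
  "ex p VL EL = Max {card E | E. simple_graph {0..<p} E \<and> \<not> contains_subgraph {0..<p} E VL EL}"

text \<open>The tree T_n^3 on vertices v_0..v_{n-1}, with v_i represented by i.\<close>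
definition T3_vertices :: "nat \<Rightarrow> nat set" where
  "T3_vertices n = {0..<n}"

definition T3_edges :: "nat \<Rightarrow> nat set set" where
  "T3_edges n = {{0, i} | i. 1 \<le> i \<and> i \<le> n - 4} \<union> {{1, n - 3}, {1, n - 2}, {1, n - 1}}"

end

theory Submission
  imports Defs
begin


definition nbr :: "'a set set \<Rightarrow> 'a \<Rightarrow> 'a set" where
  "nbr E v = {w. {v,w} \<in> E}"

lemma nbr_sym: "w \<in> nbr E v \<longleftrightarrow> v \<in> nbr E w"
  by (simp add: nbr_def insert_commute)

lemma nbr_sub: assumes "simple_graph V E" "v \<in> V" shows "nbr E v \<subseteq> V"
  using assms unfolding simple_graph_def nbr_def by auto

lemma nbr_sub': assumes "simple_graph V E" shows "nbr E v \<subseteq> V"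
  using assms unfolding simple_graph_def nbr_def by auto

lemma nbr_finite: assumes "simple_graph V E" shows "finite (nbr E v)"
  using nbr_sub'[OF assms] assms unfolding simple_graph_def by (meson finite_subset)

lemma nbr_irrefl: assumes "simple_graph V E" shows "v \<notin> nbr E v"
  using assms unfolding simple_graph_def nbr_def by fastforce

lemma edge_card2: assumes "simple_graph V E" "e \<in> E" shows "\<exists>a b. a \<noteq> b \<and> e = {a,b}"
  using assms unfolding simple_graph_def by (meson card_2_iff)

lemma handshake:
  assumes G: "simple_graph V E"
  shows "(\<Sum>v\<in>V. card (nbr E v)) = 2 * card E"
proof -
  have fV: "finite V" using G simple_graph_def by auto
  have fE: "finite E" using G unfolding simple_graph_def
    by (meson Pow_iff finite_Pow_iff finite_subset subsetI)
  have c1: "card (nbr E v) = card {e\<in>E. v \<in> e}" for v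
  proof -
    have "bij_betw (\<lambda>w. {v,w}) (nbr E v) {e\<in>E. v \<in> e}"
    proof (rule bij_betwI')
      fix x y assume "x \<in> nbr E v" "y \<in> nbr E v"
      then have "x \<noteq> v" "y \<noteq> v" using nbr_irrefl[OF G] by auto
      then show "({v, x} = {v, y}) = (x = y)" by (metis doubleton_eq_iff)
    next
      fix x assume "x \<in> nbr E v" then show "{v, x} \<in> {e \<in> E. v \<in> e}" by (simp add: nbr_def)
    next
      fix e assume "e \<in> {e \<in> E. v \<in> e}"
      then obtain a b where "a \<noteq> b" "e = {a,b}" "e \<in> E" "v \<in> e" using edge_card2[OF G] by blast
      then show "\<exists>x\<in>nbr E v. e = {v, x}" unfolding nbr_def by (auto simp: insert_commute)
    qed
    then show ?thesis by (simp add: bij_betw_same_card)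
  qed
  have "(\<Sum>v\<in>V. card {e\<in>E. v \<in> e}) = (\<Sum>v\<in>V. \<Sum>e\<in>E. if v \<in> e then 1 else 0)"
  proof (rule sum.cong)
    fix v have "{e\<in>E. v \<in> e} = E \<inter> {e. v \<in> e}" by auto
    then show "card {e\<in>E. v \<in> e} = (\<Sum>e\<in>E. if v \<in> e then 1 else 0)"
      using fE by (simp add: sum.If_cases)
  qed simp
  also have "\<dots> = (\<Sum>e\<in>E. \<Sum>v\<in>V. if v \<in> e then 1 else 0)" by (rule sum.swap)
  also have "\<dots> = (\<Sum>e\<in>E. card e)"
  proof (rule sum.cong)
    fix e assume "e \<in> E" then have "e \<subseteq> V" using G unfolding simple_graph_def by auto
    then have "V \<inter> {v. v \<in> e} = e" by auto
    then show "(\<Sum>v\<in>V. if v \<in> e then 1 else (0::nat)) = card e" using fV by (simp add: sum.If_cases)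
  qed simp
  also have "\<dots> = (\<Sum>e\<in>E. 2)" using G simple_graph_def by (intro sum.cong) auto
  finally show ?thesis using c1 by simp
qed

lemma double_count:
  assumes G: "simple_graph V E" and "A \<subseteq> V" "B \<subseteq> V"
  shows "(\<Sum>a\<in>A. card (nbr E a \<inter> B)) = (\<Sum>b\<in>B. card (nbr E b \<inter> A))"
proof -
  have fV: "finite V" using G simple_graph_def by auto
  have fA: "finite A" "finite B" using assms fV finite_subset by auto
  have "(\<Sum>a\<in>A. card (nbr E a \<inter> B)) = card (SIGMA a:A. nbr E a \<inter> B)"
    using fA by simp
  also have "\<dots> = card (SIGMA b:B. nbr E b \<inter> A)"
  proof (rule bij_betw_same_card)
    show "bij_betw (\<lambda>(x,y). (y,x)) (SIGMA a:A. nbr E a \<inter> B) (SIGMA b:B. nbr E b \<inter> A)"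
      by (rule bij_betwI') (auto simp: nbr_sym)
  qed
  also have "\<dots> = (\<Sum>b\<in>B. card (nbr E b \<inter> A))" using fA by simp
  finally show ?thesis .
qed



lemma embed:
  assumes G: "simple_graph V E" and n: "n \<ge> 6" and uw: "{u,w} \<in> E"
   and du: "card (nbr E u) \<ge> n-4" and dw: "card (nbr E w) \<ge> 4"
   and un: "card (nbr E u \<union> nbr E w) \<ge> n"
  shows "contains_subgraph V E (T3_vertices n) (T3_edges n)"
proof -
  define U' where "U' = nbr E u - {w}"
  define W' where "W' = nbr E w - {u}"
  have wu: "w \<in> nbr E u" "u \<in> nbr E w" using uw by (auto simp: nbr_def insert_commute)
  have uu: "u \<notin> nbr E u" "w \<notin> nbr E w" using nbr_irrefl[OF G] by auto
  have fin: "finite (nbr E u)" "finite (nbr E w)" using nbr_finite[OF G] by auto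
  have uV: "u \<in> V" "w \<in> V" using uw G unfolding simple_graph_def by auto
  have une: "u \<noteq> w" using wu uu by auto
  have fU: "finite U'" "finite W'" using fin by (auto simp: U'_def W'_def)
  have cU: "card U' \<ge> n - 5" using du wu fin by (simp add: U'_def card_Diff_singleton)
  have cW: "card W' \<ge> 3" using dw wu fin by (simp add: W'_def card_Diff_singleton)
  have UW: "U' \<union> W' = (nbr E u \<union> nbr E w) - {u,w}" using uu wu unfolding U'_def W'_def by auto
  have cUW: "card (U' \<union> W') \<ge> n - 2"
  proof -
    have "card ((nbr E u \<union> nbr E w) - {u,w}) = card (nbr E u \<union> nbr E w) - 2"
      using wu une fin by (subst card_Diff_subset) auto
    then show ?thesis using UW un by simp
  qed
  obtain Lf where Lf: "Lf \<subseteq> W'" "card Lf = 3" "card (U' - Lf) \<ge> n - 5"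
  proof (cases "card (W' - U') \<ge> 3")
    case True
    then obtain L where "L \<subseteq> W' - U'" "card L = 3" by (meson obtain_subset_with_card_n)
    moreover then have "U' - L = U'" by auto
    ultimately show ?thesis using that[of L] cU by auto
  next
    case False
    define a where "a = card (W' - U')"
    have "card W' = card (W' - U') + card (W' \<inter> U')"
      using fU by (metis Diff_Diff_Int card_Diff_subset_Int card_mono finite_Diff inf.cobounded1
          le_add_diff_inverse2 Int_commute card_Int_Diff) 
    then have "card (W' \<inter> U') \<ge> 3 - a" using cW a_def by linarith
    then obtain L2 where L2: "L2 \<subseteq> W' \<inter> U'" "card L2 = 3 - a" by (meson obtain_subset_with_card_n)
    define L where "L = (W' - U') \<union> L2"
    have fL2: "finite L2" using L2 fU finite_subset by blast
    have cL: "card L = 3" unfolding L_def using L2 fU fL2 False a_def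
      by (subst card_Un_disjoint) auto
    have "U' - L = U' - L2" unfolding L_def by auto
    then have "card (U' - L) = card U' - (3 - a)" using L2 fL2 by (simp add: card_Diff_subset)
    moreover have "card (U' \<union> W') = card U' + a"
    proof -
      have "U' \<union> W' = U' \<union> (W' - U')" by auto
      moreover have "card (U' \<union> (W' - U')) = card U' + card (W' - U')"
        by (rule card_Un_disjoint) (use fU in auto)
      ultimately show ?thesis using a_def by simp
    qed
    ultimately have "card (U' - L) \<ge> n - 5" using cUW False a_def by linarith
    moreover have "L \<subseteq> W'" using L2 unfolding L_def by auto
    ultimately show ?thesis using that[of L] cL by auto
  qed
  obtain S where S: "S \<subseteq> U' - Lf" "card S = n - 5" by (meson Lf(3) obtain_subset_with_card_n)
  have fS: "finite S" "finite Lf" using S Lf fU by (meson finite_Diff finite_subset)+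
  obtain g where g: "bij_betw g {2..<n-3} S"
    using finite_same_card_bij[of "{2..<n-3}" S] S fS n by auto
  obtain h where h: "bij_betw h {n-3..<n} Lf"
    using finite_same_card_bij[of "{n-3..<n}" Lf] Lf fS n by auto
  define f where "f i = (if i = 0 then u else if i = 1 then w else if i < n-3 then g i else h i)" for i
  have Snb: "S \<subseteq> nbr E u" "w \<notin> S" "u \<notin> S" using S uu unfolding U'_def by auto
  have Lnb: "Lf \<subseteq> nbr E w" "u \<notin> Lf" "w \<notin> Lf" using Lf uu unfolding W'_def by auto
  have SL: "S \<inter> Lf = {}" using S by auto
  have gS: "i \<in> {2..<n-3} \<Longrightarrow> g i \<in> S" for i using g bij_betwE by blast
  have hL: "i \<in> {n-3..<n} \<Longrightarrow> h i \<in> Lf" for i using h bij_betwE by blast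
  have ginj: "inj_on g {2..<n-3}" using g bij_betw_imp_inj_on by blast
  have hinj: "inj_on h {n-3..<n}" using h bij_betw_imp_inj_on by blast
  have reg: "(f i = u \<and> i = 0) \<or> (f i = w \<and> i = 1) \<or> (f i \<in> S \<and> f i = g i \<and> i \<in> {2..<n-3})
     \<or> (f i \<in> Lf \<and> f i = h i \<and> i \<in> {n-3..<n})" if "i < n" for i
  proof -
    consider "i = 0" | "i = 1" | "2 \<le> i \<and> i < n-3" | "n-3 \<le> i \<and> i < n" using \<open>i < n\<close> by force
    then show ?thesis
    proof cases
      case 3 then show ?thesis using gS[of i] by (simp add: f_def)
    next
      case 4 then show ?thesis using hL[of i] n by (simp add: f_def insert_commute)
    qed (simp_all add: f_def)
  qed
  have inj: "inj_on f {0..<n}"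
  proof (rule inj_onI)
    fix i j assume i: "i \<in> {0..<n}" and j: "j \<in> {0..<n}" and e: "f i = f j"
    have "i < n" "j < n" using i j by auto
    from reg[OF this(1)] reg[OF this(2)] show "i = j"
    proof (elim disjE conjE)
    qed (use e une Snb Lnb SL ginj hinj in \<open>auto dest: inj_onD\<close>)
  qed
  show ?thesis unfolding contains_subgraph_def T3_vertices_def
  proof (intro exI conjI)
    show "inj_on f {0..<n}" by (rule inj)
    show "f ` {0..<n} \<subseteq> V"
    proof
      fix x assume "x \<in> f ` {0..<n}"
      then obtain i where "i < n" "x = f i" by auto
      then show "x \<in> V" using reg[of i] uV Snb Lnb nbr_sub'[OF G] by blast
    qed
    show "\<forall>e\<in>T3_edges n. f ` e \<in> E"
    proof
      fix e assume "e \<in> T3_edges n"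
      then consider i where "e = {0,i}" "1 \<le> i" "i \<le> n - 4" | "e = {1, n-3}" | "e = {1,n-2}" | "e = {1,n-1}"
        unfolding T3_edges_def by blast
      then show "f ` e \<in> E"
      proof cases
        case 1
        then have "f i \<in> nbr E u" using gS Snb wu n by (auto simp: f_def)
        moreover have "f ` e = {f 0, f i}" using 1 by simp
        moreover have "f 0 = u" by (simp add: f_def)
        ultimately show ?thesis by (simp add: nbr_def)
      next
        case 2 moreover have "f ` e = {w, h (n-3)}" using 2 n by (simp add: f_def insert_commute)
        moreover have "h (n-3) \<in> Lf" by (rule hL) (use n in auto)
        ultimately show ?thesis using Lnb by (auto simp: nbr_def)
      next
        case 3 moreover have "f ` e = {w, h (n-2)}" using 3 n by (simp add: f_def insert_commute)
        moreover have "h (n-2) \<in> Lf" by (rule hL) (use n in auto)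
        ultimately show ?thesis using Lnb by (auto simp: nbr_def)
      next
        case 4 moreover have "f ` e = {w, h (n-1)}" using 4 n by (simp add: f_def insert_commute)
        moreover have "h (n-1) \<in> Lf" by (rule hL) (use n in auto)
        ultimately show ?thesis using Lnb by (auto simp: nbr_def)
      qed
    qed
  qed
qed



definition off :: "nat \<Rightarrow> nat \<Rightarrow> nat \<Rightarrow> nat" where
  "off p a b = (if a \<le> b then b - a else p + b - a)"

definition Offs :: "nat \<Rightarrow> nat \<Rightarrow> nat set" where
  "Offs p s = {1..s} \<union> {p-s..<p}"

definition Ecirc :: "nat \<Rightarrow> nat \<Rightarrow> nat set set" where
  "Ecirc p s = {{a,b} | a b. a < p \<and> b < p \<and> off p a b \<in> Offs p s}"

lemma off_sym:
  assumes "a < p" "b < p" "2*s < p" "off p a b \<in> Offs p s" shows "off p b a \<in> Offs p s"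
  using assms unfolding off_def Offs_def by (auto split: if_splits)

lemma Ecirc_iff:
  assumes "2*s < p"
  shows "{v,b} \<in> Ecirc p s \<longleftrightarrow> v < p \<and> b < p \<and> off p v b \<in> Offs p s"
proof
  assume "{v,b} \<in> Ecirc p s"
  then obtain a c where ac: "{v,b} = {a,c}" "a < p" "c < p" "off p a c \<in> Offs p s"
    unfolding Ecirc_def by blast
  then consider "v = a \<and> b = c" | "v = c \<and> b = a" by (metis doubleton_eq_iff)
  then show "v < p \<and> b < p \<and> off p v b \<in> Offs p s"
    by cases (use ac off_sym[OF ac(2,3) assms ac(4)] in auto)
next
  assume "v < p \<and> b < p \<and> off p v b \<in> Offs p s"
  then show "{v,b} \<in> Ecirc p s" unfolding Ecirc_def by blast
qed

lemma off_bij: assumes "v < p" shows "bij_betw (off p v) {0..<p} {0..<p}"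
proof (rule bij_betwI')
  fix x y assume "x \<in> {0..<p}" "y \<in> {0..<p}"
  then show "(off p v x = off p v y) = (x = y)" using assms unfolding off_def by auto
next
  fix x assume "x \<in> {0..<p}" then show "off p v x \<in> {0..<p}" using assms unfolding off_def by auto
next
  fix y assume y: "y \<in> {0..<p}"
  show "\<exists>x\<in>{0..<p}. y = off p v x"
  proof (cases "v + y < p")
    case True then show ?thesis by (intro bexI[of _ "v+y"]) (auto simp: off_def)
  next
    case False then show ?thesis using y assms by (intro bexI[of _ "v+y-p"]) (auto simp: off_def)
  qed
qed

lemma card_Offs: assumes "2*s < p" shows "card (Offs p s) = 2*s"
proof -
  have "card (Offs p s) = card {1..s} + card {p-s..<p}" unfolding Offs_def
    using assms by (intro card_Un_disjoint) auto
  then show ?thesis using assms by simp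
qed

lemma Ecirc_nbr: assumes "2*s < p" "v < p" shows "card (nbr (Ecirc p s) v) = 2*s"
proof -
  have "nbr (Ecirc p s) v = {b \<in> {0..<p}. off p v b \<in> Offs p s}"
    using Ecirc_iff[OF assms(1)] assms unfolding nbr_def by auto
  moreover have "bij_betw (off p v) {b \<in> {0..<p}. off p v b \<in> Offs p s} (Offs p s)"
  proof -
    have b: "bij_betw (off p v) {0..<p} {0..<p}" by (rule off_bij[OF assms(2)])
    have "Offs p s \<subseteq> {0..<p}" unfolding Offs_def using assms by auto
    then have "off p v ` {b \<in> {0..<p}. off p v b \<in> Offs p s} = Offs p s"
    proof -
      assume sub: "Offs p s \<subseteq> {0..<p}"
      show ?thesis
      proof
        show "off p v ` {b \<in> {0..<p}. off p v b \<in> Offs p s} \<subseteq> Offs p s" by auto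
        show "Offs p s \<subseteq> off p v ` {b \<in> {0..<p}. off p v b \<in> Offs p s}"
        proof
          fix x assume x: "x \<in> Offs p s"
          then have "x \<in> off p v ` {0..<p}" using sub b unfolding bij_betw_def by auto
          then obtain c where "c < p" "x = off p v c" by auto
          then show "x \<in> off p v ` {b \<in> {0..<p}. off p v b \<in> Offs p s}" using x by auto
        qed
      qed
    qed
    moreover have "inj_on (off p v) {b \<in> {0..<p}. off p v b \<in> Offs p s}"
      using b unfolding bij_betw_def by (auto intro: inj_on_subset)
    ultimately show ?thesis unfolding bij_betw_def by auto
  qed
  ultimately show ?thesis using card_Offs[OF assms(1)] bij_betw_same_card by metis
qed

lemma Ecirc_simple: assumes "2*s < p" shows "simple_graph {0..<p} (Ecirc p s)"
  unfolding simple_graph_def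
proof (intro conjI ballI)
  fix e assume "e \<in> Ecirc p s"
  then obtain a b where e: "e = {a,b}" "a < p" "b < p" "off p a b \<in> Offs p s" unfolding Ecirc_def by blast
  then have "a \<noteq> b" using assms unfolding off_def Offs_def by auto
  then show "e \<subseteq> {0..<p}" "card e = 2" using e by auto
qed simp

lemma Ecirc_card: assumes "2*s < p" shows "card (Ecirc p s) = s * p"
proof -
  have "2 * card (Ecirc p s) = (\<Sum>v\<in>{0..<p}. card (nbr (Ecirc p s) v))"
    using handshake[OF Ecirc_simple[OF assms]] by simp
  also have "\<dots> = (\<Sum>v\<in>{0..<p}. 2*s)" using Ecirc_nbr[OF assms] by (intro sum.cong) auto
  finally show ?thesis by simp
qed

definition Mt :: "nat \<Rightarrow> nat set set" where
  "Mt h = {{i, i+h} | i. i < h}"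

lemma Mt_card: "card (Mt h) = h"
proof -
  have "Mt h = (\<lambda>i. {i,i+h}) ` {0..<h}" unfolding Mt_def by auto
  moreover have "inj_on (\<lambda>i. {i,i+h}) {0..<h}"
    by (rule inj_onI) (auto simp: doubleton_eq_iff)
  ultimately show ?thesis by (simp add: card_image)
qed

lemma Mt_nbr: "card (nbr (Mt h) v) \<le> 1"
proof -
  have "nbr (Mt h) v \<subseteq> {if v < h then v + h else v - h}"
    unfolding nbr_def Mt_def by (auto simp: doubleton_eq_iff)
  then have "card (nbr (Mt h) v) \<le> card {if v < h then v + h else v - h}"
    by (intro card_mono) auto
  then show ?thesis by simp
qed

lemma circ_odd:
  assumes "2*s < p" "h = p div 2" "s < h"
  shows "simple_graph {0..<p} (Ecirc p s \<union> Mt h) \<and> card (Ecirc p s \<union> Mt h) = s*p + h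
     \<and> (\<forall>v. card (nbr (Ecirc p s \<union> Mt h) v) \<le> 2*s+1)"
proof (intro conjI allI)
  have sM: "\<forall>e\<in>Mt h. e \<subseteq> {0..<p} \<and> card e = 2" unfolding Mt_def using assms by auto
  show "simple_graph {0..<p} (Ecirc p s \<union> Mt h)"
    using Ecirc_simple[OF assms(1)] sM unfolding simple_graph_def by blast
  have disj: "Ecirc p s \<inter> Mt h = {}"
  proof -
    { fix i assume i: "i < h" "{i, i+h} \<in> Ecirc p s"
      then have "off p i (i+h) \<in> Offs p s" using Ecirc_iff[OF assms(1)] by blast
      then have False using assms i unfolding off_def Offs_def by auto }
    then show ?thesis unfolding Mt_def by auto
  qed
  have fE: "finite (Ecirc p s)" "finite (Mt h)"
  proof -
    have "Ecirc p s \<subseteq> Pow {0..<p}" using Ecirc_simple[OF assms(1)] unfolding simple_graph_def by auto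
    then show "finite (Ecirc p s)" by (rule finite_subset) simp
    have "Mt h = (\<lambda>i. {i,i+h}) ` {0..<h}" unfolding Mt_def by auto
    then show "finite (Mt h)" by simp
  qed
  show "card (Ecirc p s \<union> Mt h) = s*p + h"
    using card_Un_disjoint[OF fE disj] Ecirc_card[OF assms(1)] Mt_card by simp
  fix v
  have "nbr (Ecirc p s \<union> Mt h) v = nbr (Ecirc p s) v \<union> nbr (Mt h) v" unfolding nbr_def by auto
  moreover have "card (nbr (Ecirc p s) v) \<le> 2*s"
  proof (cases "v < p")
    case True then show ?thesis using Ecirc_nbr[OF assms(1)] by simp
  next
    case False then have "nbr (Ecirc p s) v = {}" using Ecirc_iff[OF assms(1)] unfolding nbr_def by auto
    then show ?thesis by simp
  qed
  ultimately show "card (nbr (Ecirc p s \<union> Mt h) v) \<le> 2*s+1"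
    using Mt_nbr[of h v] card_Un_le[of "nbr (Ecirc p s) v" "nbr (Mt h) v"] by simp
qed

lemma circ_even:
  assumes "2*s < p"
  shows "simple_graph {0..<p} (Ecirc p s) \<and> card (Ecirc p s) = s*p
     \<and> (\<forall>v. card (nbr (Ecirc p s) v) \<le> 2*s)"
proof (intro conjI allI)
  show "simple_graph {0..<p} (Ecirc p s)" by (rule Ecirc_simple[OF assms])
  show "card (Ecirc p s) = s*p" by (rule Ecirc_card[OF assms])
  fix v show "card (nbr (Ecirc p s) v) \<le> 2*s"
  proof (cases "v < p")
    case True then show ?thesis using Ecirc_nbr[OF assms] by simp
  next
    case False then have "nbr (Ecirc p s) v = {}" using Ecirc_iff[OF assms] unfolding nbr_def by auto
    then show ?thesis by simp
  qed
qed



lemma contains_deg: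
  assumes "contains_subgraph V E (T3_vertices n) (T3_edges n)" "n \<ge> 6"
  obtains f where "inj_on f {0..<n}" "f ` {0..<n} \<subseteq> V"
    "\<And>i. 1 \<le> i \<Longrightarrow> i \<le> n-4 \<Longrightarrow> f i \<in> nbr E (f 0)"
    "\<And>j. n-3 \<le> j \<Longrightarrow> j < n \<Longrightarrow> f j \<in> nbr E (f 1)"
    "card (nbr E (f 0)) \<ge> n - 4 \<or> \<not> finite (nbr E (f 0))"
proof -
  obtain f where f: "inj_on f {0..<n}" "f ` {0..<n} \<subseteq> V" "\<forall>e\<in>T3_edges n. f ` e \<in> E"
    using assms unfolding contains_subgraph_def T3_vertices_def by blast
  have a: "f i \<in> nbr E (f 0)" if "1 \<le> i" "i \<le> n-4" for i
  proof -
    have "{0,i} \<in> T3_edges n" unfolding T3_edges_def using that by blast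
    then show ?thesis using f(3) by (auto simp: nbr_def)
  qed
  have b: "f j \<in> nbr E (f 1)" if "n-3 \<le> j" "j < n" for j
  proof -
    have "j = n-3 \<or> j = n-2 \<or> j = n-1" using that by auto
    then have "{1,j} \<in> T3_edges n" unfolding T3_edges_def by blast
    then show ?thesis using f(3) by (auto simp: nbr_def)
  qed
  have "card (nbr E (f 0)) \<ge> n - 4 \<or> \<not> finite (nbr E (f 0))"
  proof (cases "finite (nbr E (f 0))")
    case True
    have "f ` {1..n-4} \<subseteq> nbr E (f 0)" using a by auto
    then have "card (f ` {1..n-4}) \<le> card (nbr E (f 0))" using True by (intro card_mono) auto
    moreover have "card (f ` {1..n-4}) = n - 4"
    proof -
      have "inj_on f {1..n-4}" by (rule inj_on_subset[OF f(1)]) auto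
      then show ?thesis by (simp add: card_image)
    qed
    ultimately show ?thesis by simp
  qed simp
  note c = this
  show ?thesis
    apply (rule that[of f])
    using f(1,2) a b c by auto
qed

lemma maxdeg_free:
  assumes G: "simple_graph V E" and n: "n \<ge> 6" and d: "\<And>v. card (nbr E v) \<le> n - 5"
  shows "\<not> contains_subgraph V E (T3_vertices n) (T3_edges n)"
proof
  assume c: "contains_subgraph V E (T3_vertices n) (T3_edges n)"
  obtain f where "inj_on f {0..<n}" "f ` {0..<n} \<subseteq> V"
    "\<And>i. 1 \<le> i \<Longrightarrow> i \<le> n-4 \<Longrightarrow> f i \<in> nbr E (f 0)"
    "\<And>j. n-3 \<le> j \<Longrightarrow> j < n \<Longrightarrow> f j \<in> nbr E (f 1)"
    "card (nbr E (f 0)) \<ge> n - 4 \<or> \<not> finite (nbr E (f 0))"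
    using contains_deg[OF c n] by metis
  moreover have "finite (nbr E (f 0))" by (rule nbr_finite[OF G])
  ultimately have "card (nbr E (f 0)) \<ge> n - 4" by blast
  then show False using d[of "f 0"] n by linarith
qed

definition Ecl :: "nat \<Rightarrow> nat \<Rightarrow> nat set set" where
  "Ecl m p = {e. e \<subseteq> {0..<m} \<and> card e = 2} \<union> {e. e \<subseteq> {m..<p} \<and> card e = 2}"

lemma Ecl_simple: assumes "m \<le> p" shows "simple_graph {0..<p} (Ecl m p)"
  unfolding simple_graph_def
proof (intro conjI ballI)
  fix e assume "e \<in> Ecl m p"
  then have "(e \<subseteq> {0..<m} \<or> e \<subseteq> {m..<p}) \<and> card e = 2" unfolding Ecl_def by blast
  then show "e \<subseteq> {0..<p}" "card e = 2" using assms by auto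
qed simp

lemma Ecl_card: assumes "m \<le> p" shows "card (Ecl m p) = (m choose 2) + ((p - m) choose 2)"
proof -
  have d: "{e. e \<subseteq> {0..<m} \<and> card e = 2} \<inter> {e. e \<subseteq> {m..<p} \<and> card e = 2} = {}"
  proof (rule ccontr)
    assume "\<not> ?thesis"
    then obtain e where e: "e \<subseteq> {0..<m}" "e \<subseteq> {m..<p}" "card e = 2" by blast
    then have "e \<subseteq> {}" by fastforce
    then have "e = {}" by blast
    then show False using e by simp
  qed
  have f1: "finite {e. e \<subseteq> {0..<m} \<and> card e = 2}" by (rule finite_subset[of _ "Pow {0..<m}"]) auto
  have f2: "finite {e. e \<subseteq> {m..<p} \<and> card e = 2}" by (rule finite_subset[of _ "Pow {m..<p}"]) auto
  show ?thesis unfolding Ecl_def using card_Un_disjoint[OF f1 f2 d] n_subsets[of "{0..<m}" 2]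
      n_subsets[of "{m..<p}" 2] by simp
qed

lemma Ecl_nbr_lo: assumes "v < m" shows "nbr (Ecl m p) v \<subseteq> {0..<m}"
proof
  fix x assume "x \<in> nbr (Ecl m p) v"
  then have "{v,x} \<subseteq> {0..<m} \<or> {v,x} \<subseteq> {m..<p}" unfolding nbr_def Ecl_def by blast
  then show "x \<in> {0..<m}" using assms by auto
qed

lemma Ecl_nbr_hi: assumes "m \<le> v" shows "nbr (Ecl m p) v \<subseteq> {m..<p} - {v}"
proof
  fix x assume "x \<in> nbr (Ecl m p) v"
  then have x: "{v,x} \<in> Ecl m p" by (simp add: nbr_def)
  then have c: "card {v,x} = 2" and "{v,x} \<subseteq> {0..<m} \<or> {v,x} \<subseteq> {m..<p}" unfolding Ecl_def by blast+
  have "v \<noteq> x"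
  proof
    assume "v = x" then have "card {v,x} = 1" by simp
    with c show False by simp
  qed
  moreover have "{v,x} \<subseteq> {m..<p}" using \<open>{v,x} \<subseteq> {0..<m} \<or> _\<close> assms by auto
  ultimately show "x \<in> {m..<p} - {v}" by auto
qed

lemma Ecl_free:
  assumes n: "n \<ge> 6" and p: "p = n - 1 + r" and r: "r + 5 \<le> n"
  shows "\<not> contains_subgraph {0..<p} (Ecl (n-1) p) (T3_vertices n) (T3_edges n)"
proof
  assume c: "contains_subgraph {0..<p} (Ecl (n-1) p) (T3_vertices n) (T3_edges n)"
  obtain f where f: "inj_on f {0..<n}" "f ` {0..<n} \<subseteq> {0..<p}"
    "\<And>i. 1 \<le> i \<Longrightarrow> i \<le> n-4 \<Longrightarrow> f i \<in> nbr (Ecl (n-1) p) (f 0)"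
    "\<And>j. n-3 \<le> j \<Longrightarrow> j < n \<Longrightarrow> f j \<in> nbr (Ecl (n-1) p) (f 1)"
    "card (nbr (Ecl (n-1) p) (f 0)) \<ge> n - 4 \<or> \<not> finite (nbr (Ecl (n-1) p) (f 0))"
    using contains_deg[OF c n] by metis
  have f0: "f 0 < n - 1"
  proof (rule ccontr)
    assume "\<not> f 0 < n - 1"
    then have s: "nbr (Ecl (n-1) p) (f 0) \<subseteq> {n-1..<p} - {f 0}" using Ecl_nbr_hi by simp
    then have fin: "finite (nbr (Ecl (n-1) p) (f 0))" using finite_subset by blast
    have "card (nbr (Ecl (n-1) p) (f 0)) \<le> card ({n-1..<p} - {f 0})" using s by (intro card_mono) auto
    also have "\<dots> \<le> card {n-1..<p}" by (rule card_Diff1_le)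
    also have "\<dots> \<le> r" using p by simp
    finally have "card (nbr (Ecl (n-1) p) (f 0)) \<le> r" .
    moreover have "n - 4 \<le> card (nbr (Ecl (n-1) p) (f 0))" using f(5) fin by blast
    ultimately show False using r n by linarith
  qed
  have "f 1 \<in> nbr (Ecl (n-1) p) (f 0)" using f(3)[of 1] n by simp
  then have f1: "f 1 < n - 1" using Ecl_nbr_lo[OF f0, of p] by auto
  have "f ` {0..<n} \<subseteq> {0..<n-1}"
  proof
    fix x assume "x \<in> f ` {0..<n}"
    then obtain i where i: "i < n" "x = f i" by auto
    consider "i = 0" | "1 \<le> i \<and> i \<le> n-4" | "n-3 \<le> i" using n by linarith
    then show "x \<in> {0..<n-1}"
    proof cases
      case 1 then show ?thesis using i f0 by simp
    next
      case 2 then show ?thesis using i f(3)[of i] Ecl_nbr_lo[OF f0, of p] by auto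
    next
      case 3 then show ?thesis using i f(4)[of i] Ecl_nbr_lo[OF f1, of p] by auto
    qed
  qed
  then have "card (f ` {0..<n}) \<le> card {0..<n-1}" by (intro card_mono) auto
  then show False using f(1) n by (simp add: card_image)
qed



lemma sum_le_cm: "(\<And>i. i\<in>A \<Longrightarrow> f i \<le> (K::nat)) \<Longrightarrow> sum f A \<le> card A * K"
  using sum_bounded_above[of A f K] by simp

lemma partA:
  assumes G: "simple_graph V E" and n: "n \<ge> 15"
  and noB: "\<And>u w. u \<in> V \<Longrightarrow> card (nbr E u) \<ge> n - 4 \<Longrightarrow> w \<in> nbr E u \<Longrightarrow> card (nbr E w) \<le> 3"
  shows "2 * card E \<le> (n - 5) * card V"
proof -
  have fV: "finite V" using G simple_graph_def by auto
  define Bs where "Bs = {v\<in>V. n - 4 \<le> card (nbr E v)}"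
  define Ls where "Ls = {v\<in>V. card (nbr E v) \<le> 3}"
  define Ms where "Ms = V - Bs - Ls"
  have fin: "finite Bs" "finite Ls" "finite Ms" using fV by (auto simp: Bs_def Ls_def Ms_def)
  have BL: "Bs \<inter> Ls = {}" using n by (auto simp: Bs_def Ls_def)
  have VV: "V = Bs \<union> (Ls \<union> Ms)" by (auto simp: Bs_def Ls_def Ms_def)
  have s1: "(\<Sum>v\<in>V. card (nbr E v)) = (\<Sum>v\<in>Bs. card (nbr E v)) + ((\<Sum>v\<in>Ls. card (nbr E v)) + (\<Sum>v\<in>Ms. card (nbr E v)))"
  proof -
    have d1: "Bs \<inter> (Ls \<union> Ms) = {}" "Ls \<inter> Ms = {}" using BL by (auto simp: Ms_def)
    have "(\<Sum>v\<in>Bs \<union> (Ls \<union> Ms). card (nbr E v)) = (\<Sum>v\<in>Bs. card (nbr E v)) + (\<Sum>v\<in>Ls \<union> Ms. card (nbr E v))"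
      using fin d1 by (intro sum.union_disjoint) auto
    moreover have "(\<Sum>v\<in>Ls \<union> Ms. card (nbr E v)) = (\<Sum>v\<in>Ls. card (nbr E v)) + (\<Sum>v\<in>Ms. card (nbr E v))"
      using fin d1 by (intro sum.union_disjoint) auto
    ultimately show ?thesis using VV by simp
  qed
  have nbB: "nbr E v \<subseteq> Ls" if "v \<in> Bs" for v
  proof
    fix w assume w: "w \<in> nbr E v"
    then have "w \<in> V" using nbr_sub'[OF G] by auto
    moreover have "card (nbr E w) \<le> 3" using noB[of v w] that w by (auto simp: Bs_def)
    ultimately show "w \<in> Ls" by (simp add: Ls_def)
  qed
  have "(\<Sum>v\<in>Bs. card (nbr E v)) = (\<Sum>v\<in>Bs. card (nbr E v \<inter> Ls))"
    using nbB by (intro sum.cong) (auto simp: Int_absorb2)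
  also have "\<dots> = (\<Sum>l\<in>Ls. card (nbr E l \<inter> Bs))"
    by (rule double_count[OF G]) (auto simp: Bs_def Ls_def)
  also have "\<dots> \<le> (\<Sum>l\<in>Ls. card (nbr E l))"
    by (intro sum_mono card_mono) (auto simp: nbr_finite[OF G])
  also have "\<dots> \<le> 3 * card Ls" using sum_bounded_above[of Ls "\<lambda>v. card (nbr E v)" 3]
    by (auto simp: Ls_def)
  finally have b1: "(\<Sum>v\<in>Bs. card (nbr E v)) \<le> 3 * card Ls" .
  have b2: "(\<Sum>v\<in>Ls. card (nbr E v)) \<le> 3 * card Ls" using sum_bounded_above[of Ls "\<lambda>v. card (nbr E v)" 3]
    by (auto simp: Ls_def)
  have "(\<Sum>v\<in>Ms. card (nbr E v)) \<le> card Ms * (n-5)"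
    by (rule sum_le_cm) (auto simp: Ms_def Bs_def Ls_def)
  then have b3: "(\<Sum>v\<in>Ms. card (nbr E v)) \<le> (n-5) * card Ms" by (simp add: mult.commute)
  have cV: "card V = card Bs + (card Ls + card Ms)"
  proof -
    have d1: "Bs \<inter> (Ls \<union> Ms) = {}" "Ls \<inter> Ms = {}" using BL by (auto simp: Ms_def)
    have "card (Bs \<union> (Ls \<union> Ms)) = card Bs + card (Ls \<union> Ms)" using fin d1 by (intro card_Un_disjoint) auto
    moreover have "card (Ls \<union> Ms) = card Ls + card Ms" using fin d1 by (intro card_Un_disjoint) auto
    ultimately show ?thesis using VV by simp
  qed
  have "2 * card E \<le> 3 * card Ls + 3 * card Ls + (n-5) * card Ms"
    using handshake[OF G] s1 b1 b2 b3 by linarith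
  also have "\<dots> \<le> (n-5) * card Ls + (n-5) * card Ms"
  proof -
    have "6 * card Ls \<le> (n-5) * card Ls" using n by (intro mult_right_mono) auto
    then show ?thesis by simp
  qed
  also have "\<dots> \<le> (n-5) * card V" using cV by (simp add: add_mult_distrib2)
  finally show ?thesis .
qed



lemma arith_final:
  fixes n r D t SU SY E2 :: nat
  assumes n: "n \<ge> 15" and r: "3 \<le> r" "r + 9 \<le> n" and D: "n - 4 \<le> D" "D \<le> n - 2"
    and Y: "D + 1 + Y = n - 1 + r" and tY: "t \<le> Y"
    and E2: "E2 = D + SU + SY"
    and SU: "SU \<le> D * (D + c)" and c: "c = (if D = n-2 then 0 else if D = n-3 then min 1 t else if 2 \<le> t then 2 else 1)"
    and SY1: "SY \<le> Y*(Y-1)" and SY2: "SY + t*(Y-1) \<le> 3*t + Y*(Y-1)"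
  shows "E2 \<le> (n-5)*(n-1+r) \<or> E2 \<le> (n-1)*(n-2)+r*(r-1)"
proof -
  obtain m where m: "n = r + 9 + m" using r by (metis le_add_diff_inverse add.commute)
  obtain q where q: "r = q + 3" using r by (metis le_add_diff_inverse add.commute)
  consider "D = n-2" | "D = n-3" | "D = n-4" using D by linarith
  then show ?thesis
  proof cases
    case 1
    then have "Y = r" using Y n by linarith
    then have "SY \<le> r*(r-1)" using SY1 by simp
    moreover have "SU \<le> (n-2)*(n-2)" using SU 1 c by simp
    ultimately have "E2 \<le> (n-2) + (n-2)*(n-2) + r*(r-1)" using E2 1 by linarith
    moreover have "(n-2) + (n-2)*(n-2) = (n-1)*(n-2)" using n by (simp add: m algebra_simps)
    ultimately show ?thesis by simp
  next
    case 2
    then have Yr: "Y = r + 1" using Y n by linarith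
    show ?thesis
    proof (cases "t = 0")
      case True
      then have "c = 0" using c 2 by (simp add: m)
      then have "SU \<le> (n-3)*(n-3)" using SU 2 n by simp
      moreover have "SY \<le> (r+1)*r" using SY1 Yr by simp
      ultimately have "E2 \<le> (n-3) + (n-3)*(n-3) + (r+1)*r" using E2 2 by linarith
      then show ?thesis by (simp add: m q algebra_simps)
    next
      case False
      then have "c = 1" using c 2 by (simp add: m)
      then have "SU \<le> (n-3)*(n-2)" using SU 2 by (simp add: m q)
      moreover have "SY + t*r \<le> 3*t + (r+1)*r" using SY2 Yr by simp
      moreover have "t * r \<ge> 3*t + (r - 3)"
      proof -
        have "(t - 1) * (r - 3) \<ge> 0" by simp
        then show ?thesis using False r by (simp add: q algebra_simps)
      qed
      ultimately have "E2 \<le> (n-3) + (n-3)*(n-2) + (r+1)*r - (r - 3)" using E2 2 by linarith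
      then show ?thesis by (simp add: m q algebra_simps)
    qed
  next
    case 3
    then have Yr: "Y = r + 2" using Y n by linarith
    show ?thesis
    proof (cases "t \<le> 1")
      case True
      then have "c = 1" using c 3 by (simp add: m)
      then have "SU \<le> (n-4)*(n-3)" using SU 3 by (simp add: m q)
      moreover have "SY \<le> (r+2)*(r+1)"
      proof -
        have "SY + t*(r+1) \<le> 3*t + (r+2)*(r+1)" using SY2 Yr by simp
        moreover have "3*t \<le> t*(r+1)" using r by simp
        ultimately show ?thesis by linarith
      qed
      ultimately have "E2 \<le> (n-4) + (n-4)*(n-3) + (r+2)*(r+1)" using E2 3 by linarith
      moreover have "3 * m \<le> q * m + 3 * m" by simp
      moreover have "r + m \<ge> 6" using m n by linarith
      ultimately show ?thesis by (simp add: m q algebra_simps)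
    next
      case False
      then have "c = 2" using c 3 by (simp add: m)
      then have "SU \<le> (n-4)*(n-2)" using SU 3 by (simp add: m q)
      moreover have "SY + t*(r+1) \<le> 3*t + (r+2)*(r+1)" using SY2 Yr by simp
      moreover have "t*(r+1) \<ge> 3*t + 2*(r - 2)"
      proof -
        have "q*2 \<le> q*t" using False by (intro mult_le_mono2) simp
        then have "2 + q*2 \<le> t + q*t" using False by linarith
        then show ?thesis by (simp add: q algebra_simps)
      qed
      ultimately have "E2 \<le> (n-4) + (n-4)*(n-2) + (r+2)*(r+1) - 2*(r-2)" using E2 3 by linarith
      then show ?thesis by (simp add: m q algebra_simps)
    qed
  qed
qed



lemma partB:
  assumes G: "simple_graph V E" and cV: "card V = n - 1 + r" and n: "n \<ge> 15" and r: "3 \<le> r" "r + 9 \<le> n"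
  and strong: "\<And>a b. {a,b} \<in> E \<Longrightarrow> n-4 \<le> card (nbr E a) \<Longrightarrow> 4 \<le> card (nbr E b) \<Longrightarrow> card (nbr E a \<union> nbr E b) \<le> n-1"
  and uV: "u \<in> V" and du: "n-4 \<le> card (nbr E u)" and w: "w \<in> nbr E u" "4 \<le> card (nbr E w)"
  and maxD: "\<And>v x. v \<in> V \<Longrightarrow> n-4 \<le> card (nbr E v) \<Longrightarrow> x \<in> nbr E v \<Longrightarrow> 4 \<le> card (nbr E x) \<Longrightarrow> card (nbr E v) \<le> card (nbr E u)"
  shows "2 * card E \<le> (n-5)*(n-1+r) \<or> 2 * card E \<le> (n-1)*(n-2)+r*(r-1)"
proof -
  define d where "d v = card (nbr E v)" for v
  define U where "U = nbr E u"
  define D where "D = d u"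
  have fV: "finite V" using G simple_graph_def by auto
  have fN: "finite (nbr E v)" for v using nbr_finite[OF G] .
  have NV: "nbr E v \<subseteq> V" for v using nbr_sub'[OF G] .
  have irr: "v \<notin> nbr E v" for v using nbr_irrefl[OF G] .
  have edge: "x \<in> nbr E v \<Longrightarrow> {v,x} \<in> E" for v x by (simp add: nbr_def)
  have cU: "card U = D" by (simp add: U_def D_def d_def)
  have UV: "U \<subseteq> V" using NV by (simp add: U_def)
  have uU: "u \<notin> U" using irr by (simp add: U_def)
  have Dl: "n - 4 \<le> D" using du by (simp add: D_def d_def)
  define X where "X = insert u U"
  define Y where "Y = V - X"
  have fU: "finite U" "finite X" "finite Y" using fN fV by (auto simp: U_def X_def Y_def)
  have cX: "card X = D + 1" using fU uU cU by (simp add: X_def)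
  have XV: "X \<subseteq> V" using UV uV by (simp add: X_def)
  have cY: "D + 1 + card Y = n - 1 + r"
  proof -
    have "card Y = card V - card X" unfolding Y_def using XV fU by (simp add: card_Diff_subset)
    moreover have "card X \<le> card V" using XV fV by (simp add: card_mono)
    ultimately show ?thesis using cX cV by linarith
  qed
  define ou where "ou x = card (nbr E x \<inter> Y)" for x
  have oi: "D + 1 + ou x \<le> n - 1" if x: "x \<in> U" "4 \<le> d x" for x
  proof -
    have "card (nbr E u \<union> nbr E x) \<le> n - 1"
      using strong[of u x] x du edge by (simp add: U_def d_def)
    moreover have "X \<union> (nbr E x \<inter> Y) \<subseteq> nbr E u \<union> nbr E x"
      using x nbr_sym[of x E u] by (auto simp: X_def U_def)
    moreover have "card (X \<union> (nbr E x \<inter> Y)) = D + 1 + ou x"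
      using fU fN cX by (subst card_Un_disjoint) (auto simp: Y_def ou_def)
    moreover have "finite (nbr E u \<union> nbr E x)" using fN by simp
    ultimately show ?thesis by (metis card_mono le_trans)
  qed
  have Dle: "D \<le> n - 2" using oi[of w] w by (simp add: U_def d_def)
  have dii: "d x \<le> D" if x: "x \<in> U" "n - 4 \<le> d x" for x
  proof -
    have "u \<in> nbr E x" using x nbr_sym[of x E u] by (simp add: U_def)
    moreover have "4 \<le> card (nbr E u)" using du n by linarith
    ultimately show ?thesis using maxD[of x u] x UV by (auto simp: d_def D_def)
  qed
  define YB where "YB = {y \<in> Y. \<exists>x\<in>U. n - 4 \<le> d x \<and> y \<in> nbr E x}"
  define t where "t = card YB"
  have YBY: "YB \<subseteq> Y" by (auto simp: YB_def)
  have fYB: "finite YB" using fU YBY finite_subset by blast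
  have iii: "card (nbr E y \<inter> Y) \<le> 3" if y: "y \<in> YB" for y
  proof -
    obtain x where x: "x \<in> U" "n - 4 \<le> d x" "y \<in> nbr E x" "y \<in> Y" using y by (auto simp: YB_def)
    have xy: "x \<in> nbr E y" using x nbr_sym by metis
    have xY: "x \<notin> Y" using x by (auto simp: Y_def X_def)
    show ?thesis
    proof (cases "d y \<le> 3")
      case True
      have "nbr E y \<inter> Y \<subseteq> nbr E y - {x}" using xY by auto
      then have "card (nbr E y \<inter> Y) \<le> card (nbr E y - {x})" using fN by (intro card_mono) auto
      also have "\<dots> = d y - 1" using xy fN by (simp add: d_def)
      finally show ?thesis using True by linarith
    next
      case False
      have ox: "D + 1 + ou x \<le> n - 1" using oi[of x] x n by linarith
      have st: "card (nbr E x \<union> nbr E y) \<le> n - 1"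
        using strong[of x y] x False edge by (simp add: d_def)
      define Z where "Z = (nbr E y \<inter> Y) - nbr E x"
      have "nbr E x \<union> {x} \<union> Z \<subseteq> nbr E x \<union> nbr E y" using xy by (auto simp: Z_def)
      then have "card (nbr E x \<union> {x} \<union> Z) \<le> n - 1" using st fN by (meson card_mono finite_UnI le_trans)
      moreover have "card (nbr E x \<union> {x} \<union> Z) = d x + 1 + card Z"
      proof -
        have fZ: "finite Z" using fN by (simp add: Z_def)
        have "card (nbr E x \<union> {x}) = d x + 1" using irr fN by (simp add: d_def)
        moreover have "(nbr E x \<union> {x}) \<inter> Z = {}" using xY by (auto simp: Z_def)
        moreover have "card ((nbr E x \<union> {x}) \<union> Z) = card (nbr E x \<union> {x}) + card Z"
          using fZ fN \<open>(nbr E x \<union> {x}) \<inter> Z = {}\<close> by (intro card_Un_disjoint) auto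
        ultimately show ?thesis by simp
      qed
      moreover have "card (nbr E y \<inter> Y) \<le> card Z + (ou x - 1)"
      proof -
        have "nbr E y \<inter> Y = Z \<union> (nbr E y \<inter> Y \<inter> nbr E x)" by (auto simp: Z_def)
        then have "card (nbr E y \<inter> Y) \<le> card Z + card (nbr E y \<inter> Y \<inter> nbr E x)"
          by (metis card_Un_le)
        moreover have "nbr E y \<inter> Y \<inter> nbr E x \<subseteq> (nbr E x \<inter> Y) - {y}" using irr by auto
        then have "card (nbr E y \<inter> Y \<inter> nbr E x) \<le> card ((nbr E x \<inter> Y) - {y})"
          using fN by (intro card_mono) auto
        moreover have "card ((nbr E x \<inter> Y) - {y}) = ou x - 1" using x fN by (simp add: ou_def)
        ultimately show ?thesis by linarith
      qed
      ultimately show ?thesis using x(2) ox Dl by linarith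
    qed
  qed
  have iv: "ou x \<le> t" if x: "x \<in> U" "n - 4 \<le> d x" for x
  proof -
    have "nbr E x \<inter> Y \<subseteq> YB" using x by (auto simp: YB_def)
    then show ?thesis using fYB by (simp add: ou_def t_def card_mono)
  qed
  have S1: "(\<Sum>v\<in>V. d v) = D + (\<Sum>x\<in>U. d x) + (\<Sum>y\<in>Y. d y)"
  proof -
    have VXY: "V = X \<union> Y" using XV by (auto simp: Y_def)
    have "(\<Sum>v\<in>V. d v) = (\<Sum>v\<in>X. d v) + (\<Sum>y\<in>Y. d y)"
      unfolding VXY using fU by (intro sum.union_disjoint) (auto simp: Y_def)
    moreover have "(\<Sum>v\<in>X. d v) = D + (\<Sum>x\<in>U. d x)" using fU uU by (simp add: X_def D_def)
    ultimately show ?thesis by simp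
  qed
  have S2: "(\<Sum>y\<in>Y. d y) = (\<Sum>y\<in>Y. card (nbr E y \<inter> X)) + (\<Sum>y\<in>Y. card (nbr E y \<inter> Y))"
  proof -
    have "d y = card (nbr E y \<inter> X) + card (nbr E y \<inter> Y)" for y
    proof -
      have "nbr E y = (nbr E y \<inter> X) \<union> (nbr E y \<inter> Y)" using NV[of y] by (auto simp: Y_def)
      moreover have "card ((nbr E y \<inter> X) \<union> (nbr E y \<inter> Y)) = card (nbr E y \<inter> X) + card (nbr E y \<inter> Y)"
        using fN by (intro card_Un_disjoint) (auto simp: Y_def)
      ultimately show ?thesis by (simp add: d_def)
    qed
    then show ?thesis by (simp add: sum.distrib)
  qed
  have S3: "(\<Sum>y\<in>Y. card (nbr E y \<inter> X)) = (\<Sum>x\<in>U. ou x)"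
  proof -
    have "(\<Sum>y\<in>Y. card (nbr E y \<inter> X)) = (\<Sum>x\<in>X. card (nbr E x \<inter> Y))"
      by (rule double_count[OF G]) (use XV in \<open>auto simp: Y_def\<close>)
    also have "\<dots> = card (nbr E u \<inter> Y) + (\<Sum>x\<in>U. ou x)" using fU uU by (simp add: X_def ou_def)
    also have "nbr E u \<inter> Y = {}" by (auto simp: Y_def X_def U_def)
    finally show ?thesis by simp
  qed
  define SU where "SU = (\<Sum>x\<in>U. d x + ou x)"
  define SY where "SY = (\<Sum>y\<in>Y. card (nbr E y \<inter> Y))"
  have E2: "2 * card E = D + SU + SY"
    using handshake[OF G] S1 S2 S3 by (simp add: SU_def SY_def sum.distrib d_def)
  define c where "c = (if D = n-2 then 0 else if D = n-3 then min 1 t else if 2 \<le> t then 2 else (1::nat))"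
  have nn: "n - 4 \<noteq> n - 3" "n - 4 \<noteq> n - 2" "n - 3 \<noteq> n - 2" using n by arith+
  have perx: "d x + ou x \<le> D + c" if x: "x \<in> U" for x
  proof -
    have od: "ou x \<le> d x" using fN by (simp add: ou_def d_def card_mono)
    consider "n - 4 \<le> d x" | "4 \<le> d x \<and> d x < n - 4" | "d x \<le> 3" by linarith
    then show ?thesis
    proof cases
      case 1
      then have "d x \<le> D" "D + 1 + ou x \<le> n - 1" "ou x \<le> t" using dii oi iv x n by auto
      note h = this
      consider "D = n-2" | "D = n-3" | "D = n-4" using Dl Dle by linarith
      then show ?thesis
      proof cases
        case a: 1 then have "c = 0" by (simp add: c_def)
        then show ?thesis using h a by linarith
      next
        case a: 2 then have "c = min 1 t" using nn by (simp add: c_def)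
        then show ?thesis using h a n by (cases "1 \<le> t"; simp add: min_def; linarith)
      next
        case a: 3 then have "c = (if 2 \<le> t then 2 else 1)" using nn by (simp add: c_def)
        then show ?thesis using h a n by (cases "2 \<le> t"; simp; linarith)
      qed
    next
      case 2
      then have "D + 1 + ou x \<le> n - 1" using oi x by auto
      note h = this
      consider "D = n-2" | "D = n-3" | "D = n-4" using Dl Dle by linarith
      then show ?thesis
      proof cases
        case a: 1 then have "c = 0" by (simp add: c_def)
        then show ?thesis using h a 2 by linarith
      next
        case a: 2 then have "c \<ge> 0" by simp
        then show ?thesis using h a 2 n by linarith
      next
        case a: 3 then have "c \<ge> 1" using nn by (simp add: c_def)
        then show ?thesis using h a 2 n by linarith
      qed
    next
      case 3 then show ?thesis using od Dl n by linarith
    qed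
  qed
  have SU: "SU \<le> D * (D + c)" unfolding SU_def using sum_le_cm[of U "\<lambda>x. d x + ou x" "D + c"] perx cU by simp
  have SY1: "SY \<le> card Y * (card Y - 1)"
  proof -
    have "card (nbr E y \<inter> Y) \<le> card Y - 1" if "y \<in> Y" for y
    proof -
      have "nbr E y \<inter> Y \<subseteq> Y - {y}" using irr by auto
      then have "card (nbr E y \<inter> Y) \<le> card (Y - {y})" using fU by (intro card_mono) auto
      then show ?thesis using that fU by simp
    qed
    then show ?thesis unfolding SY_def using sum_le_cm[of Y "\<lambda>y. card (nbr E y \<inter> Y)" "card Y - 1"] by simp
  qed
  have SY2: "SY + t*(card Y - 1) \<le> 3*t + card Y*(card Y - 1)"
  proof -
    have yb: "card (nbr E y \<inter> Y) \<le> card Y - 1" if "y \<in> Y" for y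
    proof -
      have "nbr E y \<inter> Y \<subseteq> Y - {y}" using irr by auto
      then have "card (nbr E y \<inter> Y) \<le> card (Y - {y})" using fU by (intro card_mono) auto
      then show ?thesis using that fU by simp
    qed
    have "SY = (\<Sum>y\<in>YB. card (nbr E y \<inter> Y)) + (\<Sum>y\<in>Y - YB. card (nbr E y \<inter> Y))"
      unfolding SY_def using fU YBY by (metis sum.subset_diff add.commute)
    moreover have "(\<Sum>y\<in>YB. card (nbr E y \<inter> Y)) \<le> t * 3"
      unfolding t_def using sum_le_cm[of YB "\<lambda>y. card (nbr E y \<inter> Y)" 3] iii by simp
    moreover have "(\<Sum>y\<in>Y - YB. card (nbr E y \<inter> Y)) \<le> card (Y - YB) * (card Y - 1)"
      using sum_le_cm[of "Y - YB" "\<lambda>y. card (nbr E y \<inter> Y)" "card Y - 1"] yb by simp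
    moreover have "card (Y - YB) = card Y - t" using YBY fYB by (simp add: t_def card_Diff_subset)
    moreover have "t \<le> card Y" using YBY fU by (simp add: t_def card_mono)
    ultimately have "SY \<le> 3*t + (card Y - t) * (card Y - 1)" by simp
    moreover have "(card Y - t) * (card Y - 1) + t * (card Y - 1) = card Y * (card Y - 1)"
      using \<open>t \<le> card Y\<close> by (metis add_mult_distrib le_add_diff_inverse2)
    ultimately show ?thesis by linarith
  qed
  have tY: "t \<le> card Y" using YBY fU by (simp add: t_def card_mono)
  show ?thesis
    by (rule arith_final[OF n r Dl Dle cY tY E2 SU c_def SY1 SY2])
qed



lemma two_choose2: "2 * (m choose 2) = m * (m - 1)"
proof -
  have "even (m * (m - 1))" by (cases m) auto
  then show ?thesis by (simp add: choose_two)
qed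

lemma upper_all:
  assumes G: "simple_graph {0..<p} E" and free: "\<not> contains_subgraph {0..<p} E (T3_vertices n) (T3_edges n)"
    and p: "p = n - 1 + r" and n: "n \<ge> 15" and r: "3 \<le> r" "r + 9 \<le> n"
  shows "card E \<le> max (((n - 5) * (n - 1 + r)) div 2) (((n - 1) choose 2) + (r choose 2))"
proof -
  have strong: "card (nbr E a \<union> nbr E b) \<le> n-1"
    if "{a,b} \<in> E" "n-4 \<le> card (nbr E a)" "4 \<le> card (nbr E b)" for a b
  proof (rule ccontr)
    assume "\<not> ?thesis"
    then have "contains_subgraph {0..<p} E (T3_vertices n) (T3_edges n)"
      using embed[OF G _ that] n by simp
    then show False using free by simp
  qed
  have cV: "card {0..<p} = n - 1 + r" using p by simp
  have "2 * card E \<le> (n-5)*(n-1+r) \<or> 2 * card E \<le> (n-1)*(n-2)+r*(r-1)"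
  proof (cases "\<exists>u\<in>{0..<p}. n-4 \<le> card (nbr E u) \<and> (\<exists>w\<in>nbr E u. 4 \<le> card (nbr E w))")
    case True
    define B1 where "B1 = {u\<in>{0..<p}. n-4 \<le> card (nbr E u) \<and> (\<exists>w\<in>nbr E u. 4 \<le> card (nbr E w))}"
    have fB: "finite B1" "B1 \<noteq> {}" using True by (auto simp: B1_def)
    define M where "M = Max ((\<lambda>v. card (nbr E v)) ` B1)"
    have "M \<in> (\<lambda>v. card (nbr E v)) ` B1" using fB unfolding M_def by (intro Max_in) auto
    then obtain u where u: "u \<in> B1" "card (nbr E u) = M" by auto
    have mx: "card (nbr E v) \<le> card (nbr E u)" if "v \<in> B1" for v
      using u fB that unfolding M_def by (auto intro: Max_ge)
    from u obtain w where w: "w \<in> nbr E u" "4 \<le> card (nbr E w)" by (auto simp: B1_def)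
    show ?thesis
    proof (rule partB[OF G cV n r strong])
      show "u \<in> {0..<p}" "n-4 \<le> card (nbr E u)" using u by (auto simp: B1_def)
      show "w \<in> nbr E u" "4 \<le> card (nbr E w)" using w by auto
      show "card (nbr E v) \<le> card (nbr E u)"
        if "v \<in> {0..<p}" "n-4 \<le> card (nbr E v)" "x \<in> nbr E v" "4 \<le> card (nbr E x)" for v x
        using mx that by (auto simp: B1_def)
    qed auto
  next
    case False
    have "2 * card E \<le> (n - 5) * card {0..<p}"
    proof (rule partA[OF G n])
      fix u w assume "u \<in> {0..<p}" "n - 4 \<le> card (nbr E u)" "w \<in> nbr E u"
      then have "\<not> 4 \<le> card (nbr E w)" using False by blast
      then show "card (nbr E w) \<le> 3" by linarith
    qed
    then show ?thesis using p by simp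
  qed
  then show ?thesis
  proof
    assume "2 * card E \<le> (n-5)*(n-1+r)"
    then have "card E \<le> ((n - 5) * (n - 1 + r)) div 2" by linarith
    then show ?thesis by simp
  next
    assume h: "2 * card E \<le> (n-1)*(n-2)+r*(r-1)"
    have "n - 1 - 1 = n - 2" by simp
    then have "(n-1)*(n-2) = 2 * ((n-1) choose 2)" using two_choose2[of "n-1"] by metis
    moreover have "r*(r-1) = 2 * (r choose 2)" using two_choose2[of r] by simp
    ultimately have "card E \<le> ((n - 1) choose 2) + (r choose 2)" using h by linarith
    then show ?thesis by simp
  qed
qed

theorem lemma4p3:
  fixes n r :: nat
  assumes "n \<ge> 15" and "3 \<le> r" and "r \<le> n - 9"
  shows "ex (n - 1 + r) (T3_vertices n) (T3_edges n)
           = max (((n - 5) * (n - 1 + r)) div 2) (((n - 1) choose 2) + (r choose 2))"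
proof -
  define p where "p = n - 1 + r"
  have n: "n \<ge> 15" and r: "3 \<le> r" "r + 9 \<le> n" using assms by auto
  define S where "S = {card E | E. simple_graph {0..<p} E \<and> \<not> contains_subgraph {0..<p} E (T3_vertices n) (T3_edges n)}"
  define A where "A = ((n - 5) * (n - 1 + r)) div 2"
  define C where "C = ((n - 1) choose 2) + (r choose 2)"
  have fin: "finite S"
  proof (rule finite_subset)
    show "S \<subseteq> {..card (Pow {0..<p::nat})}"
    proof
      fix x assume "x \<in> S"
      then obtain E where E: "x = card E" "simple_graph {0..<p} E" unfolding S_def by blast
      then have "E \<subseteq> Pow {0..<p}" unfolding simple_graph_def by auto
      then have "card E \<le> card (Pow {0..<p})" by (intro card_mono) auto
      then show "x \<in> {..card (Pow {0..<p::nat})}" using E by simp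
    qed
  qed simp
  have up: "y \<le> max A C" if "y \<in> S" for y
    using that upper_all[OF _ _ p_def n r] unfolding S_def A_def C_def by blast
  have mem: "max A C \<in> S"
  proof (cases "A \<le> C")
    case True
    have "simple_graph {0..<p} (Ecl (n-1) p)" by (rule Ecl_simple) (simp add: p_def)
    moreover have "\<not> contains_subgraph {0..<p} (Ecl (n-1) p) (T3_vertices n) (T3_edges n)"
      by (rule Ecl_free) (use n r in \<open>auto simp: p_def\<close>)
    moreover have "card (Ecl (n-1) p) = C" using Ecl_card[of "n-1" p] by (simp add: p_def C_def)
    ultimately show ?thesis using True unfolding S_def by (metis (mono_tags, lifting) max.absorb2 mem_Collect_eq)
  next
    case False
    define s where "s = (n - 5) div 2"
    define h where "h = p div 2"
    have sp: "2*s < p" using n by (simp add: s_def p_def)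
    show ?thesis
    proof (cases "even (n - 5)")
      case True
      then have ns: "n - 5 = 2*s" by (simp add: s_def)
      obtain Gs: "simple_graph {0..<p} (Ecirc p s)" and Gc: "card (Ecirc p s) = s*p"
        and Gd: "\<forall>v. card (nbr (Ecirc p s) v) \<le> 2*s" using circ_even[OF sp] by blast
      have "\<not> contains_subgraph {0..<p} (Ecirc p s) (T3_vertices n) (T3_edges n)"
        by (rule maxdeg_free[OF Gs]) (use n Gd ns in auto)
      moreover have "s*p = A" unfolding A_def p_def[symmetric] ns by simp
      ultimately show ?thesis using Gs Gc False unfolding S_def by (auto intro!: exI[of _ "Ecirc p s"])
    next
      case odd: False
      then have ns: "n - 5 = 2*s + 1" by (simp add: s_def) presburger
      have sh: "s < h" using n r by (simp add: s_def h_def p_def)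
      obtain Gs: "simple_graph {0..<p} (Ecirc p s \<union> Mt h)" and Gc: "card (Ecirc p s \<union> Mt h) = s*p + h"
        and Gd: "\<forall>v. card (nbr (Ecirc p s \<union> Mt h) v) \<le> 2*s+1" using circ_odd[OF sp h_def sh] by blast
      have "\<not> contains_subgraph {0..<p} (Ecirc p s \<union> Mt h) (T3_vertices n) (T3_edges n)"
        by (rule maxdeg_free[OF Gs]) (use n Gd ns in auto)
      moreover have "s*p + h = A"
      proof -
        have "(n-5)*p = 2*(s*p) + p" using ns by (simp add: algebra_simps)
        then show ?thesis unfolding A_def p_def[symmetric] h_def by simp
      qed
      ultimately show ?thesis using Gs Gc False unfolding S_def by (auto intro!: exI[of _ "Ecirc p s \<union> Mt h"])
    qed
  qed
  have "ex p (T3_vertices n) (T3_edges n) = max A C"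
    unfolding ex_def S_def[symmetric] by (rule Max_eqI[OF fin up mem])
  then show ?thesis by (simp add: p_def A_def C_def)
qed

end
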